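(* Let $X:I\times J\to\mathbb{R}^4$ be a pencil surface $X(s,t)=\gamma(s)+A(t)V_2(s)+B(t)V_4(s)$ (notation and standing assumptions as in the context). Then the Gaussian curvature of $X$ at $(s,t)$ is $$K=\frac{(a^2+b^2)\,\bigl(A'B''-B'A''\bigr)\,\bigl\{A'\,b\,\kappa_3-B'(\kappa_1 a-\kappa_2 b)\bigr\}-\bigl((A')^2+(B')^2\bigr)\bigl(a\,b_t-b\,a_t\bigr)^2}{E^2G^2},$$ where $E=a^2+b^2$, $G=(A')^2+(B')^2$, and all functions are evaluated at $s$, $t$ or $(s,t)$ as appropriate.
   Context: Let $I,J\subset\mathbb{R}$ be open intervals and $\gamma:I\to\mathbb{R}^4$ a smooth unit-speed curve equipped with a smooth orthonormal frame $(V_1,V_2,V_3,V_4)$ along $\gamma$ and smooth functions $\kappa_1,\kappa_2,\kappa_3:I\to\mathbb{R}$ satisfying the Frenet equations $\gamma'=V_1$, $V_1'=\kappa_1V_2$, $V_2'=-\kappa_1V_1+\kappa_2V_3$, $V_3'=-\kappa_2V_2+\kappa_3V_4$, $V_4'=-\kappa_3V_3$. Let $A,B:J\to\mathbb{R}$ be smooth ("marching-scale functions") and define the pencil surface $X(s,t)=\gamma(s)+A(t)V_2(s)+B(t)V_4(s)$. Put $a(s,t)=1-\kappa_1(s)A(t)$ and $b(s,t)=\kappa_2(s)A(t)-\kappa_3(s)B(t)$, and assume $a^2+b^2>0$ on $I\times J$ and $A'(t)^2+B'(t)^2>0$ on $J$ (so $X$ is an immersion). Primes on $A,B$ denote $d/dt$;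 subscripts $s,t$ denote partial derivatives. $K$ is the Gaussian curvature of the induced metric. *)

theory Defs
  imports "HOL-Analysis.Analysis"
begin

definition iter_deriv :: "nat \<Rightarrow> (real \<Rightarrow> 'a::real_normed_vector) \<Rightarrow> real \<Rightarrow> 'a" where
  "iter_deriv n f = ((\<lambda>g x. vector_derivative g (at x)) ^^ n) f"

definition smooth_on :: "real set \<Rightarrow> (real \<Rightarrow> 'a::real_normed_vector) \<Rightarrow> bool" where
  "smooth_on S f \<longleftrightarrow> (\<forall>n. \<forall>x\<in>S. iter_deriv n f differentiable (at x))"

definition det3 :: "real \<Rightarrow> real \<Rightarrow> real \<Rightarrow> real \<Rightarrow> real \<Rightarrow> real \<Rightarrow> real \<Rightarrow> real \<Rightarrow> real \<Rightarrow> real" where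
  "det3 a11 a12 a13 a21 a22 a23 a31 a32 a33 =
     a11 * (a22 * a33 - a23 * a32) - a12 * (a21 * a33 - a23 * a31) + a13 * (a21 * a32 - a22 * a31)"

definition fff_E :: "(real \<Rightarrow> real \<Rightarrow> 'a::real_inner) \<Rightarrow> real \<Rightarrow> real \<Rightarrow> real" where
  "fff_E X u v = vector_derivative (\<lambda>u. X u v) (at u) \<bullet> vector_derivative (\<lambda>u. X u v) (at u)"
definition fff_F :: "(real \<Rightarrow> real \<Rightarrow> 'a::real_inner) \<Rightarrow> real \<Rightarrow> real \<Rightarrow> real" where
  "fff_F X u v = vector_derivative (\<lambda>u. X u v) (at u) \<bullet> vector_derivative (\<lambda>v. X u v) (at v)"
definition fff_G :: "(real \<Rightarrow> real \<Rightarrow> 'a::real_inner) \<Rightarrow> real \<Rightarrow> real \<Rightarrow> real" where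
  "fff_G X u v = vector_derivative (\<lambda>v. X u v) (at v) \<bullet> vector_derivative (\<lambda>v. X u v) (at v)"

text \<open>Gaussian curvature of the induced metric E du^2 + 2F du dv + G dv^2,
  given by the Brioschi formula (intrinsic curvature of the metric in coordinates).\<close>
definition gauss_curvature :: "(real \<Rightarrow> real \<Rightarrow> 'a::real_inner) \<Rightarrow> real \<Rightarrow> real \<Rightarrow> real" where
  "gauss_curvature X u v =
    (let E = fff_E X; F = fff_F X; G = fff_G X;
         Eu = deriv (\<lambda>u. E u v) u; Ev = deriv (\<lambda>v. E u v) v;
         Fu = deriv (\<lambda>u. F u v) u; Fv = deriv (\<lambda>v. F u v) v;
         Gu = deriv (\<lambda>u. G u v) u; Gv = deriv (\<lambda>v. G u v) v;
         Evv = deriv (\<lambda>v. deriv (\<lambda>v. E u v) v) v;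
         Fuv = deriv (\<lambda>v. deriv (\<lambda>u. F u v) u) v;
         Guu = deriv (\<lambda>u. deriv (\<lambda>u. G u v) u) u
     in (det3 (- Evv / 2 + Fuv - Guu / 2) (Eu / 2) (Fu - Ev / 2)
              (Fv - Gu / 2) (E u v) (F u v)
              (Gv / 2) (F u v) (G u v)
       - det3 0 (Ev / 2) (Gu / 2)
              (Ev / 2) (E u v) (F u v)
              (Gu / 2) (F u v) (G u v))
       / (E u v * G u v - (F u v)^2)^2)"

definition pencil_surface ::
  "(real \<Rightarrow> real^4) \<Rightarrow> (real \<Rightarrow> real^4) \<Rightarrow> (real \<Rightarrow> real^4) \<Rightarrow> (real \<Rightarrow> real) \<Rightarrow> (real \<Rightarrow> real)
   \<Rightarrow> real \<Rightarrow> real \<Rightarrow> real^4" where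
  "pencil_surface \<gamma> V2 V4 A B s t = \<gamma> s + A t *\<^sub>R V2 s + B t *\<^sub>R V4 s"

end

theory Submission
  imports Defs
begin


lemma vd_deriv: "vector_derivative (f::real\<Rightarrow>real) (at x) = deriv f x"
  unfolding vector_derivative_def deriv_def has_vector_derivative_def has_field_derivative_def
  by (simp add: mult.commute)

lemma deriv_local:
  assumes "open S" "x \<in> S" "\<And>y. y \<in> S \<Longrightarrow> f y = g y" "(g has_real_derivative D) (at x)"
  shows "deriv f x = D"
proof -
  have "(f has_real_derivative D) (at x)"
    by (rule has_field_derivative_transform_within_open[OF assms(4) assms(1) assms(2)]) (simp add: assms(3))
  thus ?thesis by (rule DERIV_imp_deriv)
qed

lemma smooth_D1:
  assumes "smooth_on S (f::real\<Rightarrow>real)" "x \<in> S"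
  shows "(f has_real_derivative deriv f x) (at x)"
proof -
  have "iter_deriv 0 f differentiable (at x)" using assms unfolding smooth_on_def by blast
  thus ?thesis by (simp add: iter_deriv_def DERIV_deriv_iff_real_differentiable)
qed

lemma smooth_D2:
  assumes "smooth_on S (f::real\<Rightarrow>real)" "x \<in> S"
  shows "(deriv f has_real_derivative deriv (deriv f) x) (at x)"
proof -
  have "iter_deriv 1 f differentiable (at x)" using assms unfolding smooth_on_def by blast
  moreover have "iter_deriv 1 f = deriv f" by (simp add: iter_deriv_def vd_deriv[abs_def])
  ultimately show ?thesis by (simp add: DERIV_deriv_iff_real_differentiable)
qed

theorem proposition1:
  fixes I J :: "real set"
    and \<gamma> V1 V2 V3 V4 :: "real \<Rightarrow> real^4"
    and \<kappa>1 \<kappa>2 \<kappa>3 A B :: "real \<Rightarrow> real"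
    and s t :: real
  assumes I: "open I" "is_interval I" "I \<noteq> {}"
    and J: "open J" "is_interval J" "J \<noteq> {}"
    and smooth: "smooth_on I \<gamma>" "smooth_on I V1" "smooth_on I V2" "smooth_on I V3" "smooth_on I V4"
      "smooth_on I \<kappa>1" "smooth_on I \<kappa>2" "smooth_on I \<kappa>3" "smooth_on J A" "smooth_on J B"
    and orth: "\<And>x. x \<in> I \<Longrightarrow>
      V1 x \<bullet> V1 x = 1 \<and> V2 x \<bullet> V2 x = 1 \<and> V3 x \<bullet> V3 x = 1 \<and> V4 x \<bullet> V4 x = 1 \<and>
      V1 x \<bullet> V2 x = 0 \<and> V1 x \<bullet> V3 x = 0 \<and> V1 x \<bullet> V4 x = 0 \<and>
      V2 x \<bullet> V3 x = 0 \<and> V2 x \<bullet> V4 x = 0 \<and> V3 x \<bullet> V4 x = 0"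
    and frenet: "\<And>x. x \<in> I \<Longrightarrow>
      (\<gamma> has_vector_derivative V1 x) (at x) \<and>
      (V1 has_vector_derivative \<kappa>1 x *\<^sub>R V2 x) (at x) \<and>
      (V2 has_vector_derivative (- \<kappa>1 x *\<^sub>R V1 x + \<kappa>2 x *\<^sub>R V3 x)) (at x) \<and>
      (V3 has_vector_derivative (- \<kappa>2 x *\<^sub>R V2 x + \<kappa>3 x *\<^sub>R V4 x)) (at x) \<and>
      (V4 has_vector_derivative (- \<kappa>3 x *\<^sub>R V3 x)) (at x)"
    and reg1: "\<And>x y. x \<in> I \<Longrightarrow> y \<in> J \<Longrightarrow>
      (1 - \<kappa>1 x * A y)^2 + (\<kappa>2 x * A y - \<kappa>3 x * B y)^2 > 0"
    and reg2: "\<And>y. y \<in> J \<Longrightarrow> (deriv A y)^2 + (deriv B y)^2 > 0"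
    and st: "s \<in> I" "t \<in> J"
  shows
    "let a = (\<lambda>s t. 1 - \<kappa>1 s * A t);
         b = (\<lambda>s t. \<kappa>2 s * A t - \<kappa>3 s * B t);
         a_t = deriv (\<lambda>t. a s t) t;
         b_t = deriv (\<lambda>t. b s t) t;
         A' = deriv A t; B' = deriv B t;
         A'' = deriv (deriv A) t; B'' = deriv (deriv B) t;
         E = (a s t)^2 + (b s t)^2;
         G = A'^2 + B'^2
     in gauss_curvature (pencil_surface \<gamma> V2 V4 A B) s t =
        (E * (A' * B'' - B' * A'') * (A' * b s t * \<kappa>3 s - B' * (\<kappa>1 s * a s t - \<kappa>2 s * b s t))
          - G * (a s t * b_t - b s t * a_t)^2) / (E^2 * G^2)"
proof -
  define X where "X = pencil_surface \<gamma> V2 V4 A B"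
  define Ap where "Ap = deriv A"
  define Bp where "Bp = deriv B"
  define App where "App = deriv Ap"
  define Bpp where "Bpp = deriv Bp"
  have dA: "\<And>y. y \<in> J \<Longrightarrow> (A has_real_derivative Ap y) (at y)"
    using smooth_D1[OF smooth(9)] Ap_def by blast
  have dB: "\<And>y. y \<in> J \<Longrightarrow> (B has_real_derivative Bp y) (at y)"
    using smooth_D1[OF smooth(10)] Bp_def by blast
  have dAp: "\<And>y. y \<in> J \<Longrightarrow> (Ap has_real_derivative App y) (at y)"
    using smooth_D2[OF smooth(9)] Ap_def App_def by blast
  have dBp: "\<And>y. y \<in> J \<Longrightarrow> (Bp has_real_derivative Bpp y) (at y)"
    using smooth_D2[OF smooth(10)] Bp_def Bpp_def by blast
  have Xu: "\<And>u v. u \<in> I \<Longrightarrow> vector_derivative (\<lambda>u. X u v) (at u) =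
      (1 - \<kappa>1 u * A v) *\<^sub>R V1 u + (\<kappa>2 u * A v - \<kappa>3 u * B v) *\<^sub>R V3 u"
  proof -
    fix u v assume u: "u \<in> I"
    have "((\<lambda>u. X u v) has_vector_derivative
       V1 u + (A v *\<^sub>R (- \<kappa>1 u *\<^sub>R V1 u + \<kappa>2 u *\<^sub>R V3 u) + B v *\<^sub>R (- \<kappa>3 u *\<^sub>R V3 u))) (at u)"
      unfolding X_def pencil_surface_def using frenet[OF u]
      by (auto intro!: derivative_eq_intros simp: add.assoc)
    moreover have "V1 u + (A v *\<^sub>R (- \<kappa>1 u *\<^sub>R V1 u + \<kappa>2 u *\<^sub>R V3 u) + B v *\<^sub>R (- \<kappa>3 u *\<^sub>R V3 u))
       = (1 - \<kappa>1 u * A v) *\<^sub>R V1 u + (\<kappa>2 u * A v - \<kappa>3 u * B v) *\<^sub>R V3 u"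
      by (simp add: algebra_simps)
    ultimately show "vector_derivative (\<lambda>u. X u v) (at u) =
      (1 - \<kappa>1 u * A v) *\<^sub>R V1 u + (\<kappa>2 u * A v - \<kappa>3 u * B v) *\<^sub>R V3 u"
      by (metis vector_derivative_at)
  qed
  have Xv: "\<And>u v. v \<in> J \<Longrightarrow> vector_derivative (\<lambda>v. X u v) (at v) =
      Ap v *\<^sub>R V2 u + Bp v *\<^sub>R V4 u"
  proof -
    fix u v assume v: "v \<in> J"
    have "((\<lambda>v. X u v) has_vector_derivative Ap v *\<^sub>R V2 u + Bp v *\<^sub>R V4 u) (at v)"
      unfolding X_def pencil_surface_def using dA[OF v] dB[OF v]
      by (auto intro!: derivative_eq_intros)
    thus "vector_derivative (\<lambda>v. X u v) (at v) = Ap v *\<^sub>R V2 u + Bp v *\<^sub>R V4 u"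
      by (metis vector_derivative_at)
  qed
  have EE: "\<And>u v. u \<in> I \<Longrightarrow> fff_E X u v = (1 - \<kappa>1 u * A v)^2 + (\<kappa>2 u * A v - \<kappa>3 u * B v)^2"
  proof -
    fix u v assume u: "u \<in> I"
    show "fff_E X u v = (1 - \<kappa>1 u * A v)^2 + (\<kappa>2 u * A v - \<kappa>3 u * B v)^2"
      unfolding fff_E_def Xu[OF u] using orth[OF u]
      by (simp add: inner_add_left inner_add_right inner_commute power2_eq_square)
  qed
  have FF: "\<And>u v. u \<in> I \<Longrightarrow> v \<in> J \<Longrightarrow> fff_F X u v = 0"
  proof -
    fix u v assume u: "u \<in> I" and v: "v \<in> J"
    show "fff_F X u v = 0"
      unfolding fff_F_def Xu[OF u] Xv[OF v] using orth[OF u]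
      by (simp add: inner_add_left inner_add_right inner_commute)
  qed
  have GG: "\<And>u v. u \<in> I \<Longrightarrow> v \<in> J \<Longrightarrow> fff_G X u v = (Ap v)^2 + (Bp v)^2"
  proof -
    fix u v assume u: "u \<in> I" and v: "v \<in> J"
    show "fff_G X u v = (Ap v)^2 + (Bp v)^2"
      unfolding fff_G_def Xv[OF v] using orth[OF u]
      by (simp add: inner_add_left inner_add_right inner_commute power2_eq_square)
  qed
  define k1 where "k1 = \<kappa>1 s"
  define k2 where "k2 = \<kappa>2 s"
  define k3 where "k3 = \<kappa>3 s"
  define e1 where "e1 = (\<lambda>v. 2*(1 - k1 * A v)*(- k1 * Ap v) + 2*(k2 * A v - k3 * B v)*(k2 * Ap v - k3 * Bp v))"
  have Ev: "\<And>v. v \<in> J \<Longrightarrow> deriv (\<lambda>v. fff_E X s v) v = e1 v"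
  proof -
    fix v assume v: "v \<in> J"
    show "deriv (\<lambda>v. fff_E X s v) v = e1 v"
    proof (rule deriv_local[OF J(1) v])
      show "\<And>y. y \<in> J \<Longrightarrow> fff_E X s y = (1 - k1 * A y)^2 + (k2 * A y - k3 * B y)^2"
        using EE[OF st(1)] k1_def k2_def k3_def by simp
      show "((\<lambda>y. (1 - k1 * A y)^2 + (k2 * A y - k3 * B y)^2) has_real_derivative e1 v) (at v)"
        unfolding e1_def using dA[OF v] dB[OF v]
        by (auto intro!: derivative_eq_intros simp: algebra_simps)
    qed
  qed
  have Evv: "deriv (\<lambda>v. deriv (\<lambda>v. fff_E X s v) v) t =
     2*(k1 * Ap t)^2 + 2*(1 - k1 * A t)*(- k1 * App t) + 2*(k2 * Ap t - k3 * Bp t)^2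
     + 2*(k2 * A t - k3 * B t)*(k2 * App t - k3 * Bpp t)"
  proof (rule deriv_local[OF J(1) st(2)])
    show "\<And>y. y \<in> J \<Longrightarrow> deriv (\<lambda>v. fff_E X s v) y = e1 y" by (rule Ev)
    show "(e1 has_real_derivative 2*(k1 * Ap t)^2 + 2*(1 - k1 * A t)*(- k1 * App t) + 2*(k2 * Ap t - k3 * Bp t)^2
     + 2*(k2 * A t - k3 * B t)*(k2 * App t - k3 * Bpp t)) (at t)"
      unfolding e1_def using dA[OF st(2)] dB[OF st(2)] dAp[OF st(2)] dBp[OF st(2)]
      by (auto intro!: derivative_eq_intros simp: algebra_simps power2_eq_square)
  qed
  have Gv: "deriv (\<lambda>v. fff_G X s v) t = 2 * Ap t * App t + 2 * Bp t * Bpp t"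
  proof (rule deriv_local[OF J(1) st(2)])
    show "\<And>y. y \<in> J \<Longrightarrow> fff_G X s y = (Ap y)^2 + (Bp y)^2" using GG[OF st(1)] by simp
    show "((\<lambda>y. (Ap y)^2 + (Bp y)^2) has_real_derivative 2 * Ap t * App t + 2 * Bp t * Bpp t) (at t)"
      using dAp[OF st(2)] dBp[OF st(2)]
      by (auto intro!: derivative_eq_intros simp: algebra_simps)
  qed
  have Gu0: "\<And>u. u \<in> I \<Longrightarrow> deriv (\<lambda>u. fff_G X u t) u = 0"
  proof -
    fix u assume u: "u \<in> I"
    show "deriv (\<lambda>u. fff_G X u t) u = 0"
      by (rule deriv_local[OF I(1) u, where g="\<lambda>_. (Ap t)^2 + (Bp t)^2"]) (auto simp: GG st)
  qed
  have Guu: "deriv (\<lambda>u. deriv (\<lambda>u. fff_G X u t) u) s = 0"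
    by (rule deriv_local[OF I(1) st(1), where g="\<lambda>_. 0"]) (auto simp: Gu0)
  have Fu: "deriv (\<lambda>u. fff_F X u t) s = 0"
    by (rule deriv_local[OF I(1) st(1), where g="\<lambda>_. 0"]) (auto simp: FF st)
  have Fv: "deriv (\<lambda>v. fff_F X s v) t = 0"
    by (rule deriv_local[OF J(1) st(2), where g="\<lambda>_. 0"]) (auto simp: FF st)
  have Fu0: "\<And>v. v \<in> J \<Longrightarrow> deriv (\<lambda>u. fff_F X u v) s = 0"
  proof -
    fix v assume v: "v \<in> J"
    show "deriv (\<lambda>u. fff_F X u v) s = 0"
      by (rule deriv_local[OF I(1) st(1), where g="\<lambda>_. 0"]) (auto simp: FF v)
  qed
  have Fuv: "deriv (\<lambda>v. deriv (\<lambda>u. fff_F X u v) s) t = 0"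
    by (rule deriv_local[OF J(1) st(2), where g="\<lambda>_. 0"]) (auto simp: Fu0)
  have at: "deriv (\<lambda>t. 1 - \<kappa>1 s * A t) t = - k1 * Ap t"
    by (rule DERIV_imp_deriv) (auto intro!: derivative_eq_intros dA st simp: k1_def)
  have bt: "deriv (\<lambda>t. \<kappa>2 s * A t - \<kappa>3 s * B t) t = k2 * Ap t - k3 * Bp t"
    by (rule DERIV_imp_deriv) (auto intro!: derivative_eq_intros dA dB st simp: k2_def k3_def)
  show ?thesis
    unfolding X_def[symmetric] gauss_curvature_def Let_def
    unfolding Evv Gv Guu Fu Fv Fuv at bt Ev[OF st(2)] EE[OF st(1)] FF[OF st] GG[OF st] Gu0[OF st(1)]
    unfolding Ap_def[symmetric] Bp_def[symmetric] App_def[symmetric] Bpp_def[symmetric]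
      k1_def[symmetric] k2_def[symmetric] k3_def[symmetric] e1_def det3_def
    apply (simp add: power_mult_distrib)
    apply (intro disjI2)
    apply (simp add: field_simps)
    by algebra
qed

end
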